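(* Let $\mathcal{H}$ be a finite-dimensional Hilbert space and $\rho_1,\rho_2\in\mathcal{D}^\le(\mathcal{H})$. The following are equivalent: (1) $\rho_1=\rho_2$; (2) there exists an orthonormal basis $\mathcal{B}$ of $\mathcal{H}$ such that $\rho_1\,(=_\mathcal{B})^\#\,\rho_2$; (3) $\rho_1\,(=_{\mathit{sym}})^\#\,\rho_2$.
   Context: $\mathcal{D}^\le(\mathcal{H})$ is the set of partial density operators (positive, trace $\le 1$). For $\rho\in\mathcal{D}^\le(\mathcal{H}_1\otimes\mathcal{H}_2)$, $\rho$ is a coupling for $\langle\rho_1,\rho_2\rangle$ if $\mathrm{tr}_2(\rho)=\rho_1$ and $\mathrm{tr}_1(\rho)=\rho_2$ (partial traces over the second, resp. first, factor). The support $\mathrm{supp}(\rho)$ is the span of eigenvectors of $\rho$ with nonzero eigenvalues. For a closed subspace $\mathcal{X}$ of $\mathcal{H}_1\otimes\mathcal{H}_2$, we write $\rho_1\,\mathcal{X}^\#\,\rho_2$ (a lifting) if there exists a witness $\rho\in\mathcal{D}^\le(\mathcal{H}_1\otimes\mathcal{H}_2)$, i.e. a coupling $\rho$ for $\langle\rho_1,\rho_2\rangle$ with $\mathrm{supp}(\rho)\subseteq\mathcal{X}$. For an orthonormal basis $\mathcal{B}=\{|i\rangle\}$ of $\mathcal{H}$, $(=_\mathcal{B})$ is the subspace $\mathrm{span}\{|i\rangle|i\rangle\}$ of $\mathcal{H}\otimes\mathcal{H}$. $(=_{\mathit{sym}})$ is the symmetric subspace of $\mathcal{H}\otimes\mathcal{H}$,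 i.e. the range of the projection $\frac12(I\otimes I+S)$, where $S$ is the swap operator $S|\varphi,\psi\rangle=|\psi,\varphi\rangle$. *)

theory Defs
  imports "Jordan_Normal_Form.Schur_Decomposition"
begin

text \<open>Finite-dimensional Hilbert space H = C^n, vectors are complex vec of dimension n,
  operators are complex n x n matrices. The tensor product C^n1 (x) C^n2 is C^(n1*n2),
  where the basis vector |i>|j> is the standard basis vector with index i*n2+j.\<close>

definition mtrace :: "complex mat \<Rightarrow> complex" where
  "mtrace A = (\<Sum>i<dim_row A. A $$ (i, i))"

definition positive_op :: "nat \<Rightarrow> complex mat \<Rightarrow> bool" where
  "positive_op n A \<longleftrightarrow> A \<in> carrier_mat n n \<and>
     (\<forall>v \<in> carrier_vec n. Im ((A *\<^sub>v v) \<bullet>c v) = 0 \<and> Re ((A *\<^sub>v v) \<bullet>c v) \<ge> 0)"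

definition pdo :: "nat \<Rightarrow> complex mat \<Rightarrow> bool" where
  "pdo n \<rho> \<longleftrightarrow> positive_op n \<rho> \<and> Re (mtrace \<rho>) \<le> 1"

text \<open>partial traces on C^n1 (x) C^n2: tr_2 traces out the second factor, tr_1 the first\<close>
definition ptrace2 :: "nat \<Rightarrow> nat \<Rightarrow> complex mat \<Rightarrow> complex mat" where
  "ptrace2 n1 n2 \<rho> = mat n1 n1 (\<lambda>(i, k). \<Sum>j<n2. \<rho> $$ (i * n2 + j, k * n2 + j))"

definition ptrace1 :: "nat \<Rightarrow> nat \<Rightarrow> complex mat \<Rightarrow> complex mat" where
  "ptrace1 n1 n2 \<rho> = mat n2 n2 (\<lambda>(j, l). \<Sum>i<n1. \<rho> $$ (i * n2 + j, i * n2 + l))"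

definition coupling :: "nat \<Rightarrow> nat \<Rightarrow> complex mat \<Rightarrow> complex mat \<Rightarrow> complex mat \<Rightarrow> bool" where
  "coupling n1 n2 \<rho> \<rho>1 \<rho>2 \<longleftrightarrow> ptrace2 n1 n2 \<rho> = \<rho>1 \<and> ptrace1 n1 n2 \<rho> = \<rho>2"

definition cspan :: "nat \<Rightarrow> complex vec set \<Rightarrow> complex vec set" where
  "cspan n S = {v \<in> carrier_vec n. \<exists>(vs :: complex vec list) (c :: nat \<Rightarrow> complex).
      set vs \<subseteq> S \<and> (\<forall>i<n. v $ i = (\<Sum>j<length vs. c j * (vs ! j) $ i))}"

definition supp :: "complex mat \<Rightarrow> complex vec set" where
  "supp \<rho> = cspan (dim_row \<rho>) {v. \<exists>k. k \<noteq> 0 \<and> eigenvector \<rho> v k}"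

definition is_subspace :: "nat \<Rightarrow> complex vec set \<Rightarrow> bool" where
  "is_subspace n X \<longleftrightarrow> X \<subseteq> carrier_vec n \<and> cspan n X = X"

text \<open>lifting rho1 X# rho2 (X a subspace of C^n1 (x) C^n2; every subspace is closed in finite dimension)\<close>
definition lifting :: "nat \<Rightarrow> nat \<Rightarrow> complex vec set \<Rightarrow> complex mat \<Rightarrow> complex mat \<Rightarrow> bool" where
  "lifting n1 n2 X \<rho>1 \<rho>2 \<longleftrightarrow>
     (\<exists>\<rho>. pdo (n1 * n2) \<rho> \<and> coupling n1 n2 \<rho> \<rho>1 \<rho>2 \<and> supp \<rho> \<subseteq> X)"

definition tensor_vec :: "nat \<Rightarrow> nat \<Rightarrow> complex vec \<Rightarrow> complex vec \<Rightarrow> complex vec" where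
  "tensor_vec n1 n2 u v = vec (n1 * n2) (\<lambda>k. u $ (k div n2) * v $ (k mod n2))"

definition onb :: "nat \<Rightarrow> complex vec list \<Rightarrow> bool" where
  "onb n B \<longleftrightarrow> length B = n \<and> set B \<subseteq> carrier_vec n \<and>
     (\<forall>i<n. \<forall>j<n. B ! i \<bullet>c B ! j = (if i = j then 1 else 0)) \<and>
     cspan n (set B) = carrier_vec n"

definition eq_basis :: "nat \<Rightarrow> complex vec list \<Rightarrow> complex vec set" where
  "eq_basis n B = cspan (n * n) {tensor_vec n n (B ! i) (B ! i) | i. i < n}"

text \<open>swap operator S on C^n (x) C^n : S|i,j> = |j,i>\<close>
definition swap_op :: "nat \<Rightarrow> complex mat" where
  "swap_op n = mat (n * n) (n * n)
     (\<lambda>(r, c). if c = (r mod n) * n + r div n then 1 else 0)"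

definition eq_sym :: "nat \<Rightarrow> complex vec set" where
  "eq_sym n = {((1/2 :: complex) \<cdot>\<^sub>m (1\<^sub>m (n * n) + swap_op n)) *\<^sub>v v | v. v \<in> carrier_vec (n * n)}"

end

theory Submission
  imports Defs
begin


lemma cprod: "x \<in> carrier_vec n \<Longrightarrow> y \<in> carrier_vec n \<Longrightarrow> x \<bullet>c y = (\<Sum>i<n. x$i * cnj (y$i))"
  by (simp add: scalar_prod_def lessThan_atLeast0)

lemma mulv: "A \<in> carrier_mat n m \<Longrightarrow> v \<in> carrier_vec m \<Longrightarrow> i < n \<Longrightarrow> (A *\<^sub>v v) $ i = (\<Sum>k<m. A$$(i,k) * v$k)"
  by (simp add: scalar_prod_def lessThan_atLeast0)

lemma rowv: "A \<in> carrier_mat n m \<Longrightarrow> v \<in> carrier_vec m \<Longrightarrow> i < n \<Longrightarrow> row A i \<bullet> v = (\<Sum>k<m. A$$(i,k) * v$k)"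
  by (simp add: scalar_prod_def lessThan_atLeast0)

definition herm :: "nat \<Rightarrow> complex mat \<Rightarrow> bool" where
  "herm n A \<longleftrightarrow> A \<in> carrier_mat n n \<and> (\<forall>i<n. \<forall>j<n. A $$ (j,i) = cnj (A $$ (i,j)))"

lemma herm_adj:
  assumes h: "herm n A" and x: "x \<in> carrier_vec n" and y: "y \<in> carrier_vec n"
  shows "(A *\<^sub>v x) \<bullet>c y = x \<bullet>c (A *\<^sub>v y)"
proof -
  have A: "A \<in> carrier_mat n n" using h herm_def by auto
  have hA: "\<And>i k. i < n \<Longrightarrow> k < n \<Longrightarrow> cnj (A$$(k,i)) = A$$(i,k)"
    using h unfolding herm_def by metis
  have "(A *\<^sub>v x) \<bullet>c y = (\<Sum>i<n. (\<Sum>k<n. A$$(i,k) * x$k) * cnj (y$i))"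
    using A x y by (subst cprod[of _ n]) (auto simp: rowv)
  also have "\<dots> = (\<Sum>i<n. \<Sum>k<n. A$$(i,k) * x$k * cnj (y$i))"
    by (simp add: sum_distrib_right)
  also have "\<dots> = (\<Sum>k<n. \<Sum>i<n. A$$(i,k) * x$k * cnj (y$i))"
    by (rule sum.swap)
  also have "\<dots> = (\<Sum>k<n. x$k * (\<Sum>i<n. cnj (A$$(k,i)) * cnj (y$i)))"
    using hA by (simp add: sum_distrib_left mult_ac)
  also have "\<dots> = (\<Sum>k<n. x$k * cnj (\<Sum>i<n. A$$(k,i) * y$i))"
    by (simp add: cnj_sum)
  also have "\<dots> = x \<bullet>c (A *\<^sub>v y)"
    using A x y by (subst cprod[of _ n]) (auto simp: rowv)
  finally show ?thesis .
qed

lemma sum_one: "i < (n::nat) \<Longrightarrow> (\<Sum>k<n. g k * (if k = i then a else 0)) = g i * (a::complex)"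
proof -
  assume i: "i < n"
  have "(\<Sum>k<n. g k * (if k = i then a else 0)) = (\<Sum>k<n. if k = i then g i * a else 0)"
    by (rule sum.cong) auto
  also have "\<dots> = g i * a" using i sum.delta[of "{..<n}" i "\<lambda>_. g i * a"] by simp
  finally show ?thesis .
qed

lemma sum_two: "i < (n::nat) \<Longrightarrow> j < n \<Longrightarrow> i \<noteq> j \<Longrightarrow>
   (\<Sum>k<n. g k * (if k = i then a else if k = j then b else 0)) = g i * a + g j * (b::complex)"
proof -
  assume ij: "i < n" "j < n" "i \<noteq> j"
  have "(\<Sum>k<n. g k * (if k = i then a else if k = j then b else 0)) = (\<Sum>k<n. (if k = i then g i * a else 0) + (if k = j then g j * b else 0))"
    by (rule sum.cong) (use ij in auto)
  also have "\<dots> = g i * a + g j * b" using ij sum.delta[of "{..<n}" i "\<lambda>_. g i * a"] sum.delta[of "{..<n}" j "\<lambda>_. g j * b"]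
    by (simp add: sum.distrib)
  finally show ?thesis .
qed

lemma quad_one:
  fixes A :: "complex mat"
  assumes A: "A \<in> carrier_mat n n" and i: "i < n"
  shows "(A *\<^sub>v vec n (\<lambda>k. if k = i then 1 else 0)) \<bullet>c vec n (\<lambda>k. if k = i then 1 else 0) = A $$ (i,i)"
proof -
  let ?v = "vec n (\<lambda>k. if k = i then (1::complex) else 0)"
  have 1: "(A *\<^sub>v ?v) $ r = A $$ (r,i)" if r: "r < n" for r
  proof -
    have "(A *\<^sub>v ?v) $ r = (\<Sum>k<n. A$$(r,k) * (if k = i then 1 else 0))"
      using A r by (simp add: rowv)
    also have "\<dots> = A$$(r,i) * 1" by (rule sum_one[OF i])
    finally show ?thesis by simp
  qed
  have "(A *\<^sub>v ?v) \<bullet>c ?v = (\<Sum>r<n. (A *\<^sub>v ?v)$r * cnj (?v$r))"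
    by (rule cprod) (use A in auto)
  also have "\<dots> = (\<Sum>r<n. A$$(r,i) * (if r = i then 1 else 0))"
    by (rule sum.cong) (auto simp: 1)
  also have "\<dots> = A$$(i,i) * 1" by (rule sum_one[OF i])
  finally show ?thesis by simp
qed

lemma quad_two:
  fixes A :: "complex mat"
  assumes A: "A \<in> carrier_mat n n" and i: "i < n" and j: "j < n" and ij: "i \<noteq> j"
  shows "(A *\<^sub>v vec n (\<lambda>k. if k = i then 1 else if k = j then z else 0)) \<bullet>c vec n (\<lambda>k. if k = i then 1 else if k = j then z else 0)
     = A $$ (i,i) + A $$ (i,j) * z + (A $$ (j,i) + A $$ (j,j) * z) * cnj z"
proof -
  let ?v = "vec n (\<lambda>k. if k = i then 1 else if k = j then z else 0)"
  have 1: "(A *\<^sub>v ?v) $ r = A $$ (r,i) + A $$ (r,j) * z" if r: "r < n" for r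
  proof -
    have "(A *\<^sub>v ?v) $ r = (\<Sum>k<n. A$$(r,k) * (if k = i then 1 else if k = j then z else 0))"
      using A r by (simp add: rowv)
    also have "\<dots> = A$$(r,i) * 1 + A$$(r,j) * z" by (rule sum_two[OF i j ij])
    finally show ?thesis by simp
  qed
  have "(A *\<^sub>v ?v) \<bullet>c ?v = (\<Sum>r<n. (A *\<^sub>v ?v)$r * cnj (?v$r))"
    by (rule cprod) (use A in auto)
  also have "\<dots> = (\<Sum>r<n. (A $$ (r,i) + A $$ (r,j) * z) * (if r = i then 1 else if r = j then cnj z else 0))"
    by (rule sum.cong) (auto simp: 1)
  also have "\<dots> = (A $$ (i,i) + A $$ (i,j) * z) * 1 + (A $$ (j,i) + A $$ (j,j) * z) * cnj z"
    by (rule sum_two[OF i j ij])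
  finally show ?thesis by simp
qed

lemma pos_herm:
  assumes p: "positive_op n A" shows "herm n A"
proof -
  have A: "A \<in> carrier_mat n n" using p positive_op_def by auto
  have im: "\<And>v. v \<in> carrier_vec n \<Longrightarrow> Im ((A *\<^sub>v v) \<bullet>c v) = 0" using p positive_op_def by auto
  have d: "Im (A $$ (i,i)) = 0" if "i < n" for i
    using im[of "vec n (\<lambda>k. if k = i then 1 else 0)"] quad_one[OF A that] by simp
  have "A $$ (j,i) = cnj (A $$ (i,j))" if i: "i < n" and j: "j < n" for i j
  proof (cases "i = j")
    case True
    then show ?thesis using d[OF i] by (simp add: complex_eq_iff)
  next
    case False
    have 1: "Im (A $$ (i,i) + A $$ (i,j) * 1 + (A $$ (j,i) + A $$ (j,j) * 1) * cnj 1) = 0"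
      using im[of "vec n (\<lambda>k. if k = i then 1 else if k = j then 1 else 0)"] quad_two[OF A i j False, of 1] by simp
    have 2: "Im (A $$ (i,i) + A $$ (i,j) * \<i> + (A $$ (j,i) + A $$ (j,j) * \<i>) * cnj \<i>) = 0"
      using im[of "vec n (\<lambda>k. if k = i then 1 else if k = j then \<i> else 0)"] quad_two[OF A i j False, of \<i>] by simp
    show ?thesis using 1 2 d[OF i] d[OF j] by (simp add: complex_eq_iff algebra_simps)
  qed
  then show ?thesis using A unfolding herm_def by blast
qed

definition onl :: "nat \<Rightarrow> complex vec list \<Rightarrow> bool" where
  "onl n bs \<longleftrightarrow> length bs = n \<and> set bs \<subseteq> carrier_vec n \<and>
     (\<forall>i<n. \<forall>j<n. bs!i \<bullet>c bs!j = (if i = j then 1 else 0))"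

lemma onl_carrier: "onl n bs \<Longrightarrow> i < n \<Longrightarrow> bs ! i \<in> carrier_vec n"
  unfolding onl_def by auto

lemma onl_rows:
  assumes o: "onl n ws" and r: "r < n" and s: "s < n"
  shows "(\<Sum>i<n. ws!i$r * cnj(ws!i$s)) = (if r = s then 1 else 0)"
proof -
  define U where "U = mat n n (\<lambda>(r,i). ws!i $ r)"
  define V where "V = mat n n (\<lambda>(i,s). cnj (ws!i $ s))"
  have U: "U \<in> carrier_mat n n" and V: "V \<in> carrier_mat n n" unfolding U_def V_def by auto
  have "V * U = 1\<^sub>m n"
  proof (rule eq_matI)
    fix i j assume i: "i < dim_row (1\<^sub>m n :: complex mat)" and j: "j < dim_col (1\<^sub>m n :: complex mat)"
    have "(V * U) $$ (i,j) = (\<Sum>k<n. ws!j $ k * cnj (ws!i $ k))"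
      using i j by (simp add: U_def V_def scalar_prod_def lessThan_atLeast0 mult.commute)
    also have "\<dots> = ws!j \<bullet>c ws!i" using i j by (simp add: cprod[OF onl_carrier[OF o] onl_carrier[OF o]])
    also have "\<dots> = 1\<^sub>m n $$ (i,j)" using o i j unfolding onl_def by auto
    finally show "(V * U) $$ (i,j) = 1\<^sub>m n $$ (i,j)" .
  qed (auto simp: U_def V_def)
  then have "U * V = 1\<^sub>m n" using mat_mult_left_right_inverse[OF V U] by auto
  then have "(U * V) $$ (r,s) = (if r = s then 1 else 0)" using r s by simp
  then show ?thesis using r s by (simp add: U_def V_def scalar_prod_def lessThan_atLeast0)
qed

lemma complete:
  assumes o: "onl n ws" and x: "x \<in> carrier_vec n" and r: "r < n"
  shows "(\<Sum>i<n. (x \<bullet>c ws!i) * ws!i $ r) = x $ r"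
proof -
  have "(\<Sum>i<n. (x \<bullet>c ws!i) * ws!i $ r) = (\<Sum>i<n. \<Sum>s<n. x$s * cnj (ws!i$s) * ws!i $ r)"
    using onl_carrier[OF o] x by (simp add: cprod sum_distrib_right)
  also have "\<dots> = (\<Sum>s<n. \<Sum>i<n. x$s * cnj (ws!i$s) * ws!i $ r)" by (rule sum.swap)
  also have "\<dots> = (\<Sum>s<n. x$s * (\<Sum>i<n. ws!i$r * cnj (ws!i$s)))"
    by (simp add: sum_distrib_left mult_ac)
  also have "\<dots> = (\<Sum>s<n. x$s * (if s = r then 1 else 0))"
    using onl_rows[OF o r] by (auto intro!: sum.cong)
  also have "\<dots> = x $ r" using r by (simp add: sum_one)
  finally show ?thesis .
qed



lemma csym: fixes x y :: "complex vec" shows "x \<in> carrier_vec n \<Longrightarrow> y \<in> carrier_vec n \<Longrightarrow> x \<bullet>c y = cnj (y \<bullet>c x)"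
  by (simp add: cprod cnj_sum mult.commute)

lemma smult_inner_l: fixes x y :: "complex vec" shows "x \<in> carrier_vec n \<Longrightarrow> y \<in> carrier_vec n \<Longrightarrow> (k \<cdot>\<^sub>v x) \<bullet>c y = k * (x \<bullet>c y)"
proof -
  assume x: "x \<in> carrier_vec n" and y: "y \<in> carrier_vec n"
  have "(k \<cdot>\<^sub>v x) \<bullet>c y = (\<Sum>i<n. (k \<cdot>\<^sub>v x)$i * cnj (y$i))" by (rule cprod) (use x y in auto)
  also have "\<dots> = k * (\<Sum>i<n. x$i * cnj (y$i))" using x by (simp add: sum_distrib_left mult_ac)
  also have "\<dots> = k * (x \<bullet>c y)" using x y by (simp add: cprod)
  finally show ?thesis .
qed

lemma smult_inner_r: fixes x y :: "complex vec" shows "x \<in> carrier_vec n \<Longrightarrow> y \<in> carrier_vec n \<Longrightarrow> x \<bullet>c (k \<cdot>\<^sub>v y) = cnj k * (x \<bullet>c y)"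
proof -
  assume x: "x \<in> carrier_vec n" and y: "y \<in> carrier_vec n"
  have "x \<bullet>c (k \<cdot>\<^sub>v y) = cnj ((k \<cdot>\<^sub>v y) \<bullet>c x)" by (rule csym) (use x y in auto)
  also have "\<dots> = cnj k * cnj (y \<bullet>c x)" using x y by (simp add: smult_inner_l)
  also have "\<dots> = cnj k * (x \<bullet>c y)" using csym[OF x y] by simp
  finally show ?thesis .
qed

lemma self_inner: "x \<in> carrier_vec n \<Longrightarrow> x \<bullet>c x = complex_of_real (\<Sum>k<n. (cmod (x$k))^2)"
proof -
  assume x: "x \<in> carrier_vec n"
  have e: "\<And>z. z * cnj z = complex_of_real ((cmod z)^2)" by (rule complex_norm_square[symmetric])
  show ?thesis using x by (simp add: cprod e)
qed

definition nv :: "complex vec \<Rightarrow> complex vec" where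
  "nv x = (1 / complex_of_real (sqrt (Re (x \<bullet>c x)))) \<cdot>\<^sub>v x"

lemma nv_carrier: "x \<in> carrier_vec n \<Longrightarrow> nv x \<in> carrier_vec n"
  by (simp add: nv_def)

lemma nv_unit: assumes x: "x \<in> carrier_vec n" and nz: "x \<bullet>c x \<noteq> 0"
  shows "nv x \<bullet>c nv x = 1"
proof -
  define r where "r = (\<Sum>k<n. (cmod (x$k))^2)"
  have xx: "x \<bullet>c x = complex_of_real r" using self_inner[OF x] r_def by simp
  have r0: "r \<ge> 0" unfolding r_def by (auto intro: sum_nonneg)
  have r1: "r \<noteq> 0" using nz xx by auto
  have "nv x \<bullet>c nv x = (1 / complex_of_real (sqrt r)) * cnj (1 / complex_of_real (sqrt r)) * complex_of_real r"
    unfolding nv_def using x xx by (simp add: smult_inner_l smult_inner_r)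
  also have "\<dots> = complex_of_real r / (complex_of_real (sqrt r) * complex_of_real (sqrt r))" by simp
  also have "complex_of_real (sqrt r) * complex_of_real (sqrt r) = complex_of_real r"
    using r0 by (simp flip: of_real_mult)
  finally show ?thesis using r1 by simp
qed

lemma nv_orth: assumes x: "x \<in> carrier_vec n" and y: "y \<in> carrier_vec n" and o: "x \<bullet>c y = 0"
  shows "nv x \<bullet>c nv y = 0"
  unfolding nv_def using x y o by (simp add: smult_inner_l smult_inner_r)

lemma nv_one: "x \<bullet>c x = 1 \<Longrightarrow> nv x = x"
  unfolding nv_def by simp

lemma extend_onb:
  assumes n: "n > 0" and u: "u \<in> carrier_vec n" and uu: "u \<bullet>c u = 1"
  shows "\<exists>ws. onl n ws \<and> ws ! 0 = u"
proof -
  interpret cof_vec_space n "TYPE(complex)" .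
  have u0: "u \<noteq> 0\<^sub>v n" using uu u by auto
  define b where "b = basis_completion u"
  note bc = basis_completion[OF u u0, folded b_def]
  define gs where "gs = gram_schmidt n b"
  note gr = gram_schmidt_result[OF bc(2) bc(4) bc(5) gs_def]
  obtain vs where bv: "b = u # vs" using bc(6) bc(7) n by (cases b) auto
  have hd: "gs ! 0 = u" using gram_schmidt_hd[OF u, of vs] bv gs_def gr(4) bc(6) n
    by (metis hd_conv_nth length_0_conv not_gr0)
  have len: "length gs = n" using gr(4) bc(6) by simp
  define ws where "ws = map nv gs"
  have gsc: "\<And>i. i < n \<Longrightarrow> gs ! i \<in> carrier_vec n" using gr(3) len by auto
  have "onl n ws"
    unfolding onl_def
  proof (intro conjI allI impI)
    show "length ws = n" using len ws_def by simp
    show "set ws \<subseteq> carrier_vec n" using gr(3) nv_carrier unfolding ws_def by auto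
    fix i j assume i: "i < n" and j: "j < n"
    show "ws ! i \<bullet>c ws ! j = (if i = j then 1 else 0)"
    proof (cases "i = j")
      case True
      have "gs ! i \<bullet>c gs ! i \<noteq> 0" using gr(2) i len unfolding corthogonal_def by auto
      then show ?thesis using True nv_unit[OF gsc[OF i]] i len ws_def by simp
    next
      case False
      have "gs ! i \<bullet>c gs ! j = 0" using gr(2) i j False len unfolding corthogonal_def by auto
      then show ?thesis using False nv_orth[OF gsc[OF i] gsc[OF j]] i j len ws_def by simp
    qed
  qed
  moreover have "ws ! 0 = u" using hd uu nv_one n len ws_def by simp
  ultimately show ?thesis by blast
qed



definition comb :: "nat \<Rightarrow> complex vec list \<Rightarrow> (nat \<Rightarrow> complex) \<Rightarrow> complex vec" where
  "comb n ws f = vec n (\<lambda>r. \<Sum>j<n. f j * ws!j $ r)"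

lemma comb_carrier[simp]: "comb n ws f \<in> carrier_vec n"
  by (simp add: comb_def)

lemma comb_inner: assumes o: "onl n ws" and y: "y \<in> carrier_vec n"
  shows "comb n ws f \<bullet>c y = (\<Sum>j<n. f j * (ws!j \<bullet>c y))"
proof -
  have "comb n ws f \<bullet>c y = (\<Sum>r<n. (\<Sum>j<n. f j * ws!j $ r) * cnj (y$r))"
    using y by (simp add: cprod comb_def)
  also have "\<dots> = (\<Sum>r<n. \<Sum>j<n. f j * (ws!j $ r * cnj (y$r)))" by (simp add: sum_distrib_right sum_distrib_left mult_ac)
  also have "\<dots> = (\<Sum>j<n. \<Sum>r<n. f j * (ws!j $ r * cnj (y$r)))" by (rule sum.swap)
  also have "\<dots> = (\<Sum>j<n. f j * (ws!j \<bullet>c y))"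
  proof (rule sum.cong)
    fix j assume "j \<in> {..<n}"
    then have j: "j < n" by simp
    show "(\<Sum>r<n. f j * (ws!j $ r * cnj (y$r))) = f j * (ws!j \<bullet>c y)"
      using cprod[OF onl_carrier[OF o j] y] by (simp add: sum_distrib_left)
  qed simp
  finally show ?thesis .
qed

lemma comb_basis: assumes o: "onl n ws" and k: "k < n"
  shows "comb n ws f \<bullet>c ws!k = f k"
proof -
  have "comb n ws f \<bullet>c ws!k = (\<Sum>j<n. f j * (ws!j \<bullet>c ws!k))" by (rule comb_inner[OF o onl_carrier[OF o k]])
  also have "\<dots> = (\<Sum>j<n. f j * (if j = k then 1 else 0))"
    using o k unfolding onl_def by (intro sum.cong) auto
  also have "\<dots> = f k * 1" by (rule sum_one[OF k])
  finally show ?thesis by simp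
qed

lemma comb_comb: assumes o: "onl n ws"
  shows "comb n ws f \<bullet>c comb n ws g = (\<Sum>j<n. f j * cnj (g j))"
proof -
  have "comb n ws f \<bullet>c comb n ws g = (\<Sum>j<n. f j * (ws!j \<bullet>c comb n ws g))" by (rule comb_inner[OF o]) simp
  also have "\<dots> = (\<Sum>j<n. f j * cnj (g j))"
  proof (rule sum.cong)
    fix j assume "j \<in> {..<n}"
    then have j: "j < n" by simp
    have "ws!j \<bullet>c comb n ws g = cnj (comb n ws g \<bullet>c ws!j)" by (rule csym[OF onl_carrier[OF o j]]) simp
    also have "\<dots> = cnj (g j)" using comb_basis[OF o j] by simp
    finally show "f j * (ws!j \<bullet>c comb n ws g) = f j * cnj (g j)" by simp
  qed simp
  finally show ?thesis .
qed

lemma comb_complete: assumes o: "onl n ws" and y: "y \<in> carrier_vec n"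
  shows "comb n ws (\<lambda>i. y \<bullet>c ws!i) = y"
proof (rule eq_vecI)
  fix r assume "r < dim_vec y"
  then have r: "r < n" using y by simp
  show "comb n ws (\<lambda>i. y \<bullet>c ws!i) $ r = y $ r" using complete[OF o y r] r by (simp add: comb_def)
qed (use y in simp)

lemma comb_smult: "comb n ws (\<lambda>i. \<mu> * f i) = \<mu> \<cdot>\<^sub>v comb n ws f"
  by (rule eq_vecI) (simp_all add: comb_def sum_distrib_left mult_ac)

lemma eigenvalue_exists:
  fixes A :: "complex mat"
  assumes A: "A \<in> carrier_mat (Suc m) (Suc m)"
  shows "\<exists>e v. eigenvector A v e"
proof -
  obtain as where cp: "char_poly A = (\<Prod>a\<leftarrow>as. [:- a, 1:])" and len: "length as = Suc m"
    using char_poly_factorized[OF A] by blast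
  obtain e es where as: "as = e # es" using len by (cases as) auto
  have "poly (char_poly A) e = 0" unfolding cp as by simp
  then have "eigenvalue A e" using eigenvalue_root_char_poly[OF A] by simp
  then show ?thesis unfolding eigenvalue_def by blast
qed

lemma spectral:
  "herm n A \<Longrightarrow> \<exists>bs. onl n bs \<and> (\<forall>i<n. \<exists>k. A *\<^sub>v (bs!i) = k \<cdot>\<^sub>v (bs!i))"
proof (induction n arbitrary: A)
  case 0
  have "onl 0 []" unfolding onl_def by simp
  then show ?case by blast
next
  case (Suc m)
  define n where "n = Suc m"
  have h: "herm n A" using Suc.prems n_def by simp
  have A: "A \<in> carrier_mat n n" using h herm_def by auto
  obtain e v where ev: "eigenvector A v e" using eigenvalue_exists A n_def by blast
  have v: "v \<in> carrier_vec n" and v0: "v \<noteq> 0\<^sub>v n" and Av: "A *\<^sub>v v = e \<cdot>\<^sub>v v"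
    using ev A unfolding eigenvector_def by auto
  define u where "u = nv v"
  have u: "u \<in> carrier_vec n" using v nv_carrier u_def by simp
  have uu: "u \<bullet>c u = 1" using nv_unit[OF v] v v0 u_def by simp
  have Au: "A *\<^sub>v u = e \<cdot>\<^sub>v u" unfolding u_def nv_def using A v Av
    by (simp add: mult_mat_vec smult_smult_assoc mult.commute)
  obtain ws where o: "onl n ws" and w0: "ws ! 0 = u" using extend_onb[OF _ u uu] n_def by auto
  have wc: "\<And>i. i < n \<Longrightarrow> ws ! i \<in> carrier_vec n" using onl_carrier[OF o] .
  define A3 where "A3 = mat m m (\<lambda>(i,j). (A *\<^sub>v ws!(Suc j)) \<bullet>c ws!(Suc i))"
  have h3: "herm m A3"
    unfolding herm_def
  proof (intro conjI allI impI)
    show "A3 \<in> carrier_mat m m" unfolding A3_def by simp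
    fix i j assume i: "i < m" and j: "j < m"
    have i': "Suc i < n" and j': "Suc j < n" using i j n_def by auto
    have "A3 $$ (j,i) = (A *\<^sub>v ws!(Suc i)) \<bullet>c ws!(Suc j)" unfolding A3_def using i j by simp
    also have "\<dots> = ws!(Suc i) \<bullet>c (A *\<^sub>v ws!(Suc j))" by (rule herm_adj[OF h wc[OF i'] wc[OF j']])
    also have "\<dots> = cnj ((A *\<^sub>v ws!(Suc j)) \<bullet>c ws!(Suc i))"
      by (rule csym[OF wc[OF i']]) (use A wc[OF j'] in auto)
    also have "\<dots> = cnj (A3 $$ (i,j))" unfolding A3_def using i j by simp
    finally show "A3 $$ (j,i) = cnj (A3 $$ (i,j))" .
  qed
  obtain cs where oc: "onl m cs" and ec: "\<forall>i<m. \<exists>k. A3 *\<^sub>v (cs!i) = k \<cdot>\<^sub>v (cs!i)"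
    using Suc.IH[OF h3] by blast
  define f where "f c = (\<lambda>j. if j = 0 then 0 else c $ (j - 1))" for c :: "complex vec"
  define lift where "lift c = comb n ws (f c)" for c
  define bs where "bs = u # map lift cs"
  have sh: "(\<Sum>j<n. f c j * g j) = (\<Sum>j<m. c $ j * g (Suc j))" for c g
    unfolding n_def by (subst sum.lessThan_Suc_shift) (simp add: f_def)
  have lift_u: "lift c \<bullet>c u = 0" for c
    unfolding lift_def using comb_basis[OF o, of 0] w0 n_def f_def by simp
  have u_lift: "u \<bullet>c lift c = 0" for c
    using csym[OF u, of "lift c"] lift_u[of c] lift_def by simp
  have lift_lift: "lift c \<bullet>c lift d = c \<bullet>c d" if c: "c \<in> carrier_vec m" and d: "d \<in> carrier_vec m" for c d
  proof -
    have "lift c \<bullet>c lift d = (\<Sum>j<n. f c j * cnj (f d j))" unfolding lift_def by (rule comb_comb[OF o])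
    also have "\<dots> = (\<Sum>j<m. c $ j * cnj (d $ j))" unfolding n_def by (subst sum.lessThan_Suc_shift) (simp add: f_def)
    also have "\<dots> = c \<bullet>c d" using c d by (simp add: cprod)
    finally show ?thesis .
  qed
  have lift_eig: "A *\<^sub>v lift c = \<mu> \<cdot>\<^sub>v lift c" if c: "c \<in> carrier_vec m" and cev: "A3 *\<^sub>v c = \<mu> \<cdot>\<^sub>v c" for c \<mu>
  proof -
    have y: "A *\<^sub>v lift c \<in> carrier_vec n" using A unfolding lift_def by simp
    have coef: "(A *\<^sub>v lift c) \<bullet>c ws!i = \<mu> * f c i" if i: "i < n" for i
    proof (cases i)
      case 0
      have "(A *\<^sub>v lift c) \<bullet>c ws!i = lift c \<bullet>c (A *\<^sub>v u)"
        using herm_adj[OF h _ u, of "lift c"] 0 w0 lift_def by simp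
      also have "\<dots> = cnj e * (lift c \<bullet>c u)" unfolding Au lift_def by (rule smult_inner_r[OF _ u]) simp
      also have "\<dots> = 0" using lift_u by simp
      finally show ?thesis using 0 f_def by simp
    next
      case (Suc i')
      have i': "i' < m" using i Suc n_def by simp
      have "(A *\<^sub>v lift c) \<bullet>c ws!i = lift c \<bullet>c (A *\<^sub>v ws!i)"
        using herm_adj[OF h _ wc[OF i], of "lift c"] lift_def by simp
      also have "\<dots> = (\<Sum>j<n. f c j * (ws!j \<bullet>c (A *\<^sub>v ws!i)))"
        unfolding lift_def by (rule comb_inner[OF o]) (use A wc[OF i] in simp)
      also have "\<dots> = (\<Sum>j<m. c $ j * (ws!(Suc j) \<bullet>c (A *\<^sub>v ws!i)))" by (rule sh)
      also have "\<dots> = (\<Sum>j<m. A3 $$ (i', j) * c $ j)"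
      proof (rule sum.cong)
        fix j assume "j \<in> {..<m}"
        then have j: "j < m" by simp
        then have j': "Suc j < n" using n_def by simp
        have "ws!(Suc j) \<bullet>c (A *\<^sub>v ws!i) = (A *\<^sub>v ws!(Suc j)) \<bullet>c ws!i"
          using herm_adj[OF h wc[OF j'] wc[OF i]] by simp
        then show "c $ j * (ws!(Suc j) \<bullet>c (A *\<^sub>v ws!i)) = A3 $$ (i', j) * c $ j"
          unfolding A3_def using i' j Suc by simp
      qed simp
      also have "\<dots> = (A3 *\<^sub>v c) $ i'" by (rule mulv[symmetric]) (use i' c in \<open>simp_all add: A3_def\<close>)
      also have "\<dots> = \<mu> * c $ i'" using cev i' c by simp
      finally show ?thesis using Suc f_def by simp
    qed
    have "A *\<^sub>v lift c = comb n ws (\<lambda>i. (A *\<^sub>v lift c) \<bullet>c ws!i)" using comb_complete[OF o y] by simp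
    also have "\<dots> = comb n ws (\<lambda>i. \<mu> * f c i)" unfolding comb_def using coef by simp
    also have "\<dots> = \<mu> \<cdot>\<^sub>v lift c" unfolding lift_def by (rule comb_smult)
    finally show ?thesis .
  qed
  have csc: "\<And>i. i < m \<Longrightarrow> cs ! i \<in> carrier_vec m" using onl_carrier[OF oc] .
  have "onl n bs"
    unfolding onl_def
  proof (intro conjI allI impI)
    show "length bs = n" using oc n_def bs_def unfolding onl_def by simp
    show "set bs \<subseteq> carrier_vec n" using u unfolding bs_def lift_def by auto
    fix i j assume i: "i < n" and j: "j < n"
    show "bs ! i \<bullet>c bs ! j = (if i = j then 1 else 0)"
    proof (cases i)
      case 0
      show ?thesis
      proof (cases j)
        case (Suc j')
        have j': "j' < m" using j Suc n_def by simp
        then show ?thesis using \<open>i = 0\<close> Suc oc u_lift unfolding onl_def by (simp add: bs_def)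
      qed (use \<open>i = 0\<close> in \<open>simp add: bs_def uu\<close>)
    next
      case (Suc i')
      have i': "i' < m" using i Suc n_def by simp
      show ?thesis
      proof (cases j)
        case 0
        then show ?thesis using Suc i' oc unfolding onl_def by (simp add: bs_def lift_u)
      next
        case (Suc j')
        have j': "j' < m" using j Suc n_def by simp
        show ?thesis using \<open>i = Suc i'\<close> Suc i' j' oc lift_lift[OF csc[OF i'] csc[OF j']]
          unfolding onl_def by (simp add: bs_def)
      qed
    qed
  qed
  moreover have "\<forall>i<n. \<exists>k. A *\<^sub>v (bs!i) = k \<cdot>\<^sub>v (bs!i)"
  proof (intro allI impI)
    fix i assume i: "i < n"
    show "\<exists>k. A *\<^sub>v (bs!i) = k \<cdot>\<^sub>v (bs!i)"
    proof (cases i)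
      case 0
      then show ?thesis using Au bs_def by auto
    next
      case (Suc i')
      have i': "i' < m" using i Suc n_def by simp
      obtain k where "A3 *\<^sub>v (cs!i') = k \<cdot>\<^sub>v (cs!i')" using ec i' by blast
      then show ?thesis using lift_eig[OF csc[OF i']] Suc i' oc unfolding onl_def by (auto simp: bs_def)
    qed
  qed
  ultimately show ?case using n_def by blast
qed



definition sw :: "nat \<Rightarrow> nat \<Rightarrow> nat" where "sw n r = (r mod n) * n + r div n"

lemma sw_ij: "a < n \<Longrightarrow> j < (n::nat) \<Longrightarrow> sw n (a * n + j) = j * n + a"
  unfolding sw_def by simp

lemma idx_lt: "a < n \<Longrightarrow> j < (n::nat) \<Longrightarrow> a * n + j < n * n"
proof -
  assume a: "a < n" and j: "j < n"
  have "a * n + j < a * n + n" using j by simp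
  also have "\<dots> = (a + 1) * n" by simp
  also have "\<dots> \<le> n * n" using a by (intro mult_right_mono) auto
  finally show ?thesis .
qed

lemma div_lt: "r < n * (n::nat) \<Longrightarrow> r div n < n"
  by (simp add: less_mult_imp_div_less)

lemma mod_lt: "r < n * (n::nat) \<Longrightarrow> r mod n < n"
  by (metis mod_less_divisor mult_0_right nat_neq_iff not_less_zero)

lemma idx_decomp: "r = (r div n) * n + r mod (n::nat)"
  by simp

lemma sw_lt: "r < n * n \<Longrightarrow> sw n r < n * n"
  unfolding sw_def using idx_lt[OF mod_lt div_lt] by simp

lemma sw_sw: "r < n * n \<Longrightarrow> sw n (sw n r) = r"
proof -
  assume r: "r < n * n"
  have "sw n (sw n r) = (r div n) * n + r mod n"
    unfolding sw_def using sw_ij[OF mod_lt[OF r] div_lt[OF r]] sw_def by simp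
  then show ?thesis by simp
qed

lemma sum_one_l: "i < (n::nat) \<Longrightarrow> (\<Sum>k<n. (if k = i then a else 0) * g k) = a * (g i :: complex)"
  using sum_one[of i n g a] by (simp add: mult.commute)

lemma sym_vec_eq:
  assumes w: "w \<in> carrier_vec (n * n)"
  shows "((1/2 :: complex) \<cdot>\<^sub>m (1\<^sub>m (n * n) + swap_op n)) *\<^sub>v w = vec (n * n) (\<lambda>r. (1/2) * (w $ r + w $ (sw n r)))"
proof (rule eq_vecI)
  fix r assume "r < dim_vec (vec (n * n) (\<lambda>r. (1/2 :: complex) * (w $ r + w $ (sw n r))))"
  then have r: "r < n * n" by simp
  have S: "swap_op n \<in> carrier_mat (n*n) (n*n)" unfolding swap_op_def by simp
  have "(((1/2 :: complex) \<cdot>\<^sub>m (1\<^sub>m (n * n) + swap_op n)) *\<^sub>v w) $ r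
      = (\<Sum>c<n*n. ((1/2 :: complex) \<cdot>\<^sub>m (1\<^sub>m (n * n) + swap_op n)) $$ (r,c) * w $ c)"
    by (rule mulv) (use S w r in auto)
  also have "\<dots> = (\<Sum>c<n*n. (1/2) * ((if c = r then 1 else 0) * w $ c) + (1/2) * ((if c = sw n r then 1 else 0) * w $ c))"
    by (rule sum.cong) (use r S in \<open>auto simp: swap_op_def sw_def algebra_simps\<close>)
  also have "\<dots> = (1/2) * (\<Sum>c<n*n. (if c = r then 1 else 0) * w $ c) + (1/2) * (\<Sum>c<n*n. (if c = sw n r then 1 else 0) * w $ c)"
    by (simp add: sum.distrib sum_distrib_left)
  also have "\<dots> = (1/2) * (1 * w $ r) + (1/2) * (1 * w $ (sw n r))"
    using sum_one_l[OF r] sum_one_l[OF sw_lt[OF r]] by simp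
  finally show "(((1/2 :: complex) \<cdot>\<^sub>m (1\<^sub>m (n * n) + swap_op n)) *\<^sub>v w) $ r = vec (n * n) (\<lambda>r. (1/2) * (w $ r + w $ (sw n r))) $ r"
    using r by (simp add: algebra_simps)
qed (simp add: swap_op_def)

lemma eq_sym_D:
  assumes v: "v \<in> eq_sym n" and r: "r < n * n"
  shows "v $ (sw n r) = v $ r" "v \<in> carrier_vec (n * n)"
proof -
  obtain w where w: "w \<in> carrier_vec (n * n)" and vw: "v = ((1/2 :: complex) \<cdot>\<^sub>m (1\<^sub>m (n * n) + swap_op n)) *\<^sub>v w"
    using v unfolding eq_sym_def by blast
  have v': "v = vec (n * n) (\<lambda>r. (1/2) * (w $ r + w $ (sw n r)))" using vw sym_vec_eq[OF w] by simp
  show "v $ (sw n r) = v $ r" unfolding v' using r sw_lt[OF r] sw_sw[OF r] by (simp add: algebra_simps)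
  show "v \<in> carrier_vec (n * n)" unfolding v' by simp
qed

lemma eq_sym_I:
  assumes v: "v \<in> carrier_vec (n * n)" and s: "\<And>r. r < n * n \<Longrightarrow> v $ (sw n r) = v $ r"
  shows "v \<in> eq_sym n"
proof -
  have "((1/2 :: complex) \<cdot>\<^sub>m (1\<^sub>m (n * n) + swap_op n)) *\<^sub>v v = v"
    unfolding sym_vec_eq[OF v] using v s by (intro eq_vecI) auto
  then have "v = ((1/2 :: complex) \<cdot>\<^sub>m (1\<^sub>m (n * n) + swap_op n)) *\<^sub>v v" by simp
  then show ?thesis unfolding eq_sym_def using v by blast
qed

lemma tensor_idx: "a < n \<Longrightarrow> j < n \<Longrightarrow> tensor_vec n n x y $ (a * n + j) = x $ a * y $ j"
  unfolding tensor_vec_def using idx_lt by simp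

lemma tensor_sym: "r < n * n \<Longrightarrow> tensor_vec n n x x $ (sw n r) = tensor_vec n n x x $ r"
proof -
  assume r: "r < n * n"
  have "tensor_vec n n x x $ (sw n r) = x $ (r mod n) * x $ (r div n)"
    unfolding sw_def using tensor_idx[OF mod_lt[OF r] div_lt[OF r]] by simp
  also have "\<dots> = tensor_vec n n x x $ r" unfolding tensor_vec_def using r by simp
  finally show ?thesis .
qed

lemma eq_basis_sub: "eq_basis n B \<subseteq> eq_sym n"
proof
  fix v assume "v \<in> eq_basis n B"
  then obtain vs c where v: "v \<in> carrier_vec (n * n)"
    and vs: "set vs \<subseteq> {tensor_vec n n (B ! i) (B ! i) | i. i < n}"
    and vc: "\<forall>i<n*n. v $ i = (\<Sum>j<length vs. c j * (vs ! j) $ i)"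
    unfolding eq_basis_def cspan_def by blast
  show "v \<in> eq_sym n"
  proof (rule eq_sym_I[OF v])
    fix r assume r: "r < n * n"
    have "v $ (sw n r) = (\<Sum>j<length vs. c j * (vs ! j) $ (sw n r))" using vc sw_lt[OF r] by simp
    also have "\<dots> = (\<Sum>j<length vs. c j * (vs ! j) $ r)"
    proof (rule sum.cong)
      fix j assume "j \<in> {..<length vs}"
      then have "vs ! j \<in> set vs" by simp
      then obtain i where "vs ! j = tensor_vec n n (B ! i) (B ! i)" using vs by blast
      then show "c j * (vs ! j) $ (sw n r) = c j * (vs ! j) $ r" using tensor_sym[OF r] by simp
    qed simp
    also have "\<dots> = v $ r" using vc r by simp
    finally show "v $ (sw n r) = v $ r" .
  qed
qed

lemma sum_split: "(\<Sum>r<n*n. g r) = (\<Sum>a<n. \<Sum>j<(n::nat). g (a * n + j))"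
proof -
  have inj: "inj_on (\<lambda>(a,j). a * n + j) ({..<n} \<times> {..<n})"
  proof (rule inj_onI, clarsimp)
    fix a j a' j' assume "a < n" "j < n" "a' < n" "j' < n" "a * n + j = a' * n + j'"
    then show "a = a' \<and> j = j'"
      by (metis add.commute div_mult_self1 div_less mod_mult_self1 mod_less not_less0 zero_less_iff_neq_zero add_0 )
  qed
  have img: "(\<lambda>(a,j). a * n + j) ` ({..<n} \<times> {..<n}) = {..<n*n}"
  proof
    show "(\<lambda>(a,j). a * n + j) ` ({..<n} \<times> {..<n}) \<subseteq> {..<n*n}" using idx_lt by auto
    show "{..<n*n} \<subseteq> (\<lambda>(a,j). a * n + j) ` ({..<n} \<times> {..<n})"
    proof
      fix r assume "r \<in> {..<n*n}"
      then have r: "r < n * n" by simp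
      have "r = (\<lambda>(a,j). a * n + j) (r div n, r mod n)" by simp
      moreover have "(r div n, r mod n) \<in> {..<n} \<times> {..<n}" using div_lt[OF r] mod_lt[OF r] by simp
      ultimately show "r \<in> (\<lambda>(a,j). a * n + j) ` ({..<n} \<times> {..<n})" by blast
    qed
  qed
  have "(\<Sum>r<n*n. g r) = (\<Sum>p\<in>{..<n} \<times> {..<n}. g ((\<lambda>(a,j). a * n + j) p))"
    using sum.reindex[OF inj, of g] img by simp
  also have "\<dots> = (\<Sum>a<n. \<Sum>j<n. g (a * n + j))"
    by (simp add: sum.cartesian_product split_def)
  finally show ?thesis .
qed



lemma unit_col:
  fixes A :: "complex mat"
  assumes A: "A \<in> carrier_mat n n" and r: "r < n" and c: "c < n"
  shows "(A *\<^sub>v vec n (\<lambda>k. if k = c then 1 else 0)) $ r = A $$ (r,c)"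
proof -
  have "(A *\<^sub>v vec n (\<lambda>k. if k = c then 1 else 0)) $ r = (\<Sum>k<n. A$$(r,k) * (if k = c then 1 else 0))"
    using A r by (simp add: rowv)
  also have "\<dots> = A$$(r,c) * 1" by (rule sum_one[OF c])
  finally show ?thesis by simp
qed

lemma decomp:
  assumes h: "herm n A" and o: "onl n bs" and ev: "\<forall>i<n. A *\<^sub>v bs!i = k i \<cdot>\<^sub>v bs!i"
    and kr: "\<forall>i<n. cnj (k i) = k i"
    and r: "r < n" and c: "c < n"
  shows "A $$ (r,c) = (\<Sum>i<n. k i * bs!i$r * cnj (bs!i$c))"
proof -
  have A: "A \<in> carrier_mat n n" using h herm_def by auto
  define e where "e = vec n (\<lambda>k. if k = c then (1::complex) else 0)"
  have e: "e \<in> carrier_vec n" unfolding e_def by simp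
  have bc: "\<And>i. i < n \<Longrightarrow> bs!i \<in> carrier_vec n" using onl_carrier[OF o] .
  have "A $$ (r,c) = (A *\<^sub>v e) $ r" using unit_col[OF A r c] e_def by simp
  also have "\<dots> = (\<Sum>i<n. ((A *\<^sub>v e) \<bullet>c bs!i) * bs!i $ r)"
    by (rule complete[symmetric, OF o _ r]) (use A e in simp)
  also have "\<dots> = (\<Sum>i<n. k i * bs!i$r * cnj (bs!i$c))"
  proof (rule sum.cong)
    fix i assume "i \<in> {..<n}"
    then have i: "i < n" by simp
    have "(A *\<^sub>v e) \<bullet>c bs!i = e \<bullet>c (A *\<^sub>v bs!i)" by (rule herm_adj[OF h e bc[OF i]])
    also have "\<dots> = cnj (k i) * (e \<bullet>c bs!i)" using ev i smult_inner_r[OF e bc[OF i]] by simp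
    also have "e \<bullet>c bs!i = (\<Sum>j<n. (if j = c then 1 else 0) * cnj (bs!i$j))"
      using e bc[OF i] by (simp add: cprod e_def)
    also have "\<dots> = 1 * cnj (bs!i$c)" by (rule sum_one_l[OF c])
    finally show "((A *\<^sub>v e) \<bullet>c bs!i) * bs!i $ r = k i * bs!i$r * cnj (bs!i$c)"
      using kr i by simp
  qed simp
  finally show ?thesis .
qed

definition r1 :: "nat \<Rightarrow> nat \<Rightarrow> (nat \<Rightarrow> complex) \<Rightarrow> (nat \<Rightarrow> complex vec) \<Rightarrow> complex mat" where
  "r1 N m k t = mat N N (\<lambda>(r,c). \<Sum>i<m. k i * t i $ r * cnj (t i $ c))"

lemma r1_carrier: "r1 N m k t \<in> carrier_mat N N" unfolding r1_def by simp

lemma r1_mulv: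
  assumes t: "\<And>i. i < m \<Longrightarrow> t i \<in> carrier_vec N" and v: "v \<in> carrier_vec N" and r: "r < N"
  shows "(r1 N m k t *\<^sub>v v) $ r = (\<Sum>i<m. k i * (v \<bullet>c t i) * t i $ r)"
proof -
  have "(r1 N m k t *\<^sub>v v) $ r = (\<Sum>c<N. r1 N m k t $$ (r,c) * v $ c)"
    by (rule mulv[OF r1_carrier v r])
  also have "\<dots> = (\<Sum>c<N. \<Sum>i<m. k i * t i $ r * (v $ c * cnj (t i $ c)))"
    using r by (simp add: r1_def sum_distrib_right sum_distrib_left mult_ac)
  also have "\<dots> = (\<Sum>i<m. \<Sum>c<N. k i * t i $ r * (v $ c * cnj (t i $ c)))" by (rule sum.swap)
  also have "\<dots> = (\<Sum>i<m. k i * (v \<bullet>c t i) * t i $ r)"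
  proof (rule sum.cong)
    fix i assume "i \<in> {..<m}"
    then have i: "i < m" by simp
    show "(\<Sum>c<N. k i * t i $ r * (v $ c * cnj (t i $ c))) = k i * (v \<bullet>c t i) * t i $ r"
      using cprod[OF v t[OF i]] by (simp add: sum_distrib_left mult_ac)
  qed simp
  finally show ?thesis .
qed

lemma r1_quad:
  assumes t: "\<And>i. i < m \<Longrightarrow> t i \<in> carrier_vec N" and v: "v \<in> carrier_vec N"
  shows "(r1 N m k t *\<^sub>v v) \<bullet>c v = (\<Sum>i<m. k i * complex_of_real ((cmod (v \<bullet>c t i))^2))"
proof -
  have Mv: "r1 N m k t *\<^sub>v v \<in> carrier_vec N" by (rule mult_mat_vec_carrier[OF r1_carrier v])
  have "(r1 N m k t *\<^sub>v v) \<bullet>c v = (\<Sum>r<N. (r1 N m k t *\<^sub>v v) $ r * cnj (v $ r))"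
    by (rule cprod[OF Mv v])
  also have "\<dots> = (\<Sum>r<N. \<Sum>i<m. k i * (v \<bullet>c t i) * (t i $ r * cnj (v $ r)))"
    by (rule sum.cong) (simp_all add: r1_mulv[OF t v] sum_distrib_right sum_distrib_left mult_ac)
  also have "\<dots> = (\<Sum>i<m. \<Sum>r<N. k i * (v \<bullet>c t i) * (t i $ r * cnj (v $ r)))" by (rule sum.swap)
  also have "\<dots> = (\<Sum>i<m. k i * complex_of_real ((cmod (v \<bullet>c t i))^2))"
  proof (rule sum.cong)
    fix i assume "i \<in> {..<m}"
    then have i: "i < m" by simp
    have "(\<Sum>r<N. k i * (v \<bullet>c t i) * (t i $ r * cnj (v $ r))) = k i * (v \<bullet>c t i) * (t i \<bullet>c v)"
      using cprod[OF t[OF i] v] by (simp add: sum_distrib_left)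
    moreover have "t i \<bullet>c v = cnj (v \<bullet>c t i)" by (rule csym[OF t[OF i] v])
    moreover have "(v \<bullet>c t i) * cnj (v \<bullet>c t i) = complex_of_real ((cmod (v \<bullet>c t i))^2)"
      by (rule complex_norm_square[symmetric])
    ultimately show "(\<Sum>r<N. k i * (v \<bullet>c t i) * (t i $ r * cnj (v $ r))) = k i * complex_of_real ((cmod (v \<bullet>c t i))^2)"
      by (simp add: mult.assoc)
  qed simp
  finally show ?thesis .
qed

lemma r1_pos:
  assumes t: "\<And>i. i < m \<Longrightarrow> t i \<in> carrier_vec N"
    and k: "\<And>i. i < m \<Longrightarrow> Im (k i) = 0 \<and> Re (k i) \<ge> 0"
  shows "positive_op N (r1 N m k t)"
  unfolding positive_op_def
proof (intro conjI ballI r1_carrier)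
  fix v :: "complex vec" assume v: "v \<in> carrier_vec N"
  have q: "(r1 N m k t *\<^sub>v v) \<bullet>c v = (\<Sum>i<m. k i * complex_of_real ((cmod (v \<bullet>c t i))^2))"
    by (rule r1_quad[OF t v])
  have "Im (\<Sum>i<m. k i * complex_of_real ((cmod (v \<bullet>c t i))^2)) = 0"
    unfolding Im_sum using k by simp
  then show "Im ((r1 N m k t *\<^sub>v v) \<bullet>c v) = 0" using q by simp
  have "Re (\<Sum>i<m. k i * complex_of_real ((cmod (v \<bullet>c t i))^2)) \<ge> 0"
    unfolding Re_sum using k by (auto intro!: sum_nonneg)
  then show "Re ((r1 N m k t *\<^sub>v v) \<bullet>c v) \<ge> 0" using q by simp
qed

lemma r1_eig:
  assumes t: "\<And>i. i < m \<Longrightarrow> t i \<in> carrier_vec N" and v: "v \<in> carrier_vec N"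
    and ev: "r1 N m k t *\<^sub>v v = \<kappa> \<cdot>\<^sub>v v" and k0: "\<kappa> \<noteq> 0" and r: "r < N"
  shows "v $ r = (\<Sum>i<m. (k i * (v \<bullet>c t i) / \<kappa>) * t i $ r)"
proof -
  have "\<kappa> * v $ r = (r1 N m k t *\<^sub>v v) $ r" using ev v r by simp
  also have "\<dots> = (\<Sum>i<m. k i * (v \<bullet>c t i) * t i $ r)" by (rule r1_mulv[OF t v r])
  finally have "v $ r = (\<Sum>i<m. k i * (v \<bullet>c t i) * t i $ r) / \<kappa>" using k0 by (simp add: field_simps)
  then show ?thesis by (simp add: sum_divide_distrib mult_ac)
qed



lemma cspanI: "v \<in> carrier_vec n \<Longrightarrow> set vs \<subseteq> S \<Longrightarrow> (\<forall>i<n. v$i = (\<Sum>j<length vs. c j * vs!j $ i)) \<Longrightarrow> v \<in> cspan n S"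
  unfolding cspan_def by blast

lemma exists_coupling:
  assumes p: "pdo n \<rho>"
  shows "\<exists>B. onb n B \<and> lifting n n (eq_basis n B) \<rho> \<rho>"
proof -
  have pos: "positive_op n \<rho>" using p pdo_def by auto
  have h: "herm n \<rho>" by (rule pos_herm[OF pos])
  have R: "\<rho> \<in> carrier_mat n n" using h herm_def by auto
  obtain bs where o: "onl n bs" and ev0: "\<forall>i<n. \<exists>k. \<rho> *\<^sub>v (bs!i) = k \<cdot>\<^sub>v (bs!i)"
    using spectral[OF h] by blast
  obtain k where ev: "\<forall>i<n. \<rho> *\<^sub>v (bs!i) = k i \<cdot>\<^sub>v (bs!i)" using ev0[unfolded choice_iff'] by blast
  have bc: "\<And>i. i < n \<Longrightarrow> bs!i \<in> carrier_vec n" using onl_carrier[OF o] .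
  have bb: "\<And>i. i < n \<Longrightarrow> bs!i \<bullet>c bs!i = 1" using o unfolding onl_def by auto
  have kq: "k i = (\<rho> *\<^sub>v bs!i) \<bullet>c bs!i" if i: "i < n" for i
    using ev i smult_inner_l[OF bc[OF i] bc[OF i], of "k i"] bb[OF i] by simp
  have kpos: "Im (k i) = 0 \<and> Re (k i) \<ge> 0" if i: "i < n" for i
    using pos bc[OF i] kq[OF i] unfolding positive_op_def by auto
  have kr: "\<forall>i<n. cnj (k i) = k i" using kpos by (simp add: complex_eq_iff)
  note dc = decomp[OF h o ev kr]
  define N where "N = n * n"
  define t where "t i = tensor_vec n n (bs!i) (bs!i)" for i
  define \<sigma> where "\<sigma> = r1 N n k t"
  have dS: "dim_row \<sigma> = N" unfolding \<sigma>_def r1_def by simp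
  have tc: "\<And>i. i < n \<Longrightarrow> t i \<in> carrier_vec N" unfolding t_def tensor_vec_def N_def by simp
  have tidx: "t i $ (a * n + j) = bs!i$a * bs!i$j" if "a < n" "j < n" for i a j
    unfolding t_def using tensor_idx[OF that] .
  have bsum: "(\<Sum>j<n. bs!i$j * cnj (bs!i$j)) = 1" if i: "i < n" for i
    using bb[OF i] cprod[OF bc[OF i] bc[OF i]] by simp
  have tt: "t i \<bullet>c t i = 1" if i: "i < n" for i
  proof -
    have "t i \<bullet>c t i = (\<Sum>r<n*n. t i $ r * cnj (t i $ r))" using cprod[OF tc[OF i] tc[OF i]] N_def by simp
    also have "\<dots> = (\<Sum>a<n. \<Sum>j<n. t i $ (a*n+j) * cnj (t i $ (a*n+j)))" by (rule sum_split)
    also have "\<dots> = (\<Sum>a<n. \<Sum>j<n. (bs!i$a * cnj (bs!i$a)) * (bs!i$j * cnj (bs!i$j)))"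
      by (intro sum.cong refl) (simp add: tidx mult_ac)
    also have "\<dots> = (\<Sum>a<n. bs!i$a * cnj (bs!i$a)) * (\<Sum>j<n. bs!i$j * cnj (bs!i$j))"
      by (simp add: sum_product)
    also have "\<dots> = 1" using bsum[OF i] by simp
    finally show ?thesis .
  qed
  have onb: "onb n bs"
    unfolding onb_def
  proof (intro conjI)
    show "length bs = n" using o unfolding onl_def by auto
    show "set bs \<subseteq> carrier_vec n" using o unfolding onl_def by auto
    show "\<forall>i<n. \<forall>j<n. bs ! i \<bullet>c bs ! j = (if i = j then 1 else 0)" using o unfolding onl_def by auto
    show "cspan n (set bs) = carrier_vec n"
    proof
      show "cspan n (set bs) \<subseteq> carrier_vec n" unfolding cspan_def by auto
      show "carrier_vec n \<subseteq> cspan n (set bs)"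
      proof
        fix x :: "complex vec" assume x: "x \<in> carrier_vec n"
        have "\<forall>i<n. x $ i = (\<Sum>j<length bs. (x \<bullet>c bs!j) * (bs ! j) $ i)"
          using complete[OF o x] o unfolding onl_def by simp
        then show "x \<in> cspan n (set bs)" by (intro cspanI[OF x, of bs]) auto
      qed
    qed
  qed
  have sp: "positive_op N \<sigma>" unfolding \<sigma>_def by (rule r1_pos[OF tc kpos])
  have trs: "mtrace \<sigma> = (\<Sum>i<n. k i)"
  proof -
    have "mtrace \<sigma> = (\<Sum>r<N. \<Sum>i<n. k i * (t i $ r * cnj (t i $ r)))"
      unfolding mtrace_def \<sigma>_def r1_def by (simp add: mult.assoc)
    also have "\<dots> = (\<Sum>i<n. \<Sum>r<N. k i * (t i $ r * cnj (t i $ r)))" by (rule sum.swap)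
    also have "\<dots> = (\<Sum>i<n. k i * (t i \<bullet>c t i))"
    proof (rule sum.cong)
      fix i assume "i \<in> {..<n}" then have i: "i < n" by simp
      show "(\<Sum>r<N. k i * (t i $ r * cnj (t i $ r))) = k i * (t i \<bullet>c t i)"
        using cprod[OF tc[OF i] tc[OF i]] by (simp add: sum_distrib_left)
    qed simp
    also have "\<dots> = (\<Sum>i<n. k i)" using tt by simp
    finally show ?thesis .
  qed
  have trr: "mtrace \<rho> = (\<Sum>i<n. k i)"
  proof -
    have "mtrace \<rho> = (\<Sum>r<n. \<Sum>i<n. k i * (bs!i$r * cnj (bs!i$r)))"
      unfolding mtrace_def using R dc by (simp add: mult.assoc)
    also have "\<dots> = (\<Sum>i<n. \<Sum>r<n. k i * (bs!i$r * cnj (bs!i$r)))" by (rule sum.swap)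
    also have "\<dots> = (\<Sum>i<n. k i)"
      by (rule sum.cong) (simp_all add: bsum flip: sum_distrib_left)
    finally show ?thesis .
  qed
  have pdoS: "pdo N \<sigma>" unfolding pdo_def using sp trs trr p unfolding pdo_def by simp
  have p2: "ptrace2 n n \<sigma> = \<rho>"
  proof (rule eq_matI)
    fix a c assume "a < dim_row \<rho>" and "c < dim_col \<rho>"
    then have a: "a < n" and c: "c < n" using R by auto
    have "ptrace2 n n \<sigma> $$ (a,c) = (\<Sum>j<n. \<sigma> $$ (a*n+j, c*n+j))" unfolding ptrace2_def using a c by simp
    also have "\<dots> = (\<Sum>j<n. \<Sum>i<n. k i * (bs!i$a * cnj (bs!i$c)) * (bs!i$j * cnj (bs!i$j)))"
      by (intro sum.cong refl) (simp add: \<sigma>_def r1_def N_def idx_lt a c tidx mult_ac)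
    also have "\<dots> = (\<Sum>i<n. \<Sum>j<n. k i * (bs!i$a * cnj (bs!i$c)) * (bs!i$j * cnj (bs!i$j)))" by (rule sum.swap)
    also have "\<dots> = (\<Sum>i<n. k i * bs!i$a * cnj (bs!i$c))"
      by (rule sum.cong) (simp_all add: bsum mult.assoc flip: sum_distrib_left)
    also have "\<dots> = \<rho> $$ (a,c)" using dc[OF a c] by simp
    finally show "ptrace2 n n \<sigma> $$ (a,c) = \<rho> $$ (a,c)" .
  qed (use R in \<open>simp_all add: ptrace2_def\<close>)
  have p1: "ptrace1 n n \<sigma> = \<rho>"
  proof (rule eq_matI)
    fix a c assume "a < dim_row \<rho>" and "c < dim_col \<rho>"
    then have a: "a < n" and c: "c < n" using R by auto
    have "ptrace1 n n \<sigma> $$ (a,c) = (\<Sum>j<n. \<sigma> $$ (j*n+a, j*n+c))" unfolding ptrace1_def using a c by simp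
    also have "\<dots> = (\<Sum>j<n. \<Sum>i<n. k i * (bs!i$a * cnj (bs!i$c)) * (bs!i$j * cnj (bs!i$j)))"
      by (intro sum.cong refl) (simp add: \<sigma>_def r1_def N_def idx_lt a c tidx mult_ac)
    also have "\<dots> = (\<Sum>i<n. \<Sum>j<n. k i * (bs!i$a * cnj (bs!i$c)) * (bs!i$j * cnj (bs!i$j)))" by (rule sum.swap)
    also have "\<dots> = (\<Sum>i<n. k i * bs!i$a * cnj (bs!i$c))"
      by (rule sum.cong) (simp_all add: bsum mult.assoc flip: sum_distrib_left)
    also have "\<dots> = \<rho> $$ (a,c)" using dc[OF a c] by simp
    finally show "ptrace1 n n \<sigma> $$ (a,c) = \<rho> $$ (a,c)" .
  qed (use R in \<open>simp_all add: ptrace1_def\<close>)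
  have su: "supp \<sigma> \<subseteq> eq_basis n bs"
  proof
    fix v assume "v \<in> supp \<sigma>"
    then obtain vs c where v: "v \<in> carrier_vec N" and vs: "set vs \<subseteq> {v. \<exists>\<kappa>. \<kappa> \<noteq> 0 \<and> eigenvector \<sigma> v \<kappa>}"
      and vc: "\<forall>r<N. v $ r = (\<Sum>j<length vs. c j * vs!j $ r)"
      unfolding supp_def cspan_def dS by auto
    have coef: "\<forall>j<length vs. \<exists>d. \<forall>r<N. vs!j $ r = (\<Sum>i<n. d i * t i $ r)"
    proof (intro allI impI)
      fix j assume "j < length vs"
      then have "vs!j \<in> set vs" by simp
      then obtain \<kappa> where k0: "\<kappa> \<noteq> 0" and e: "eigenvector \<sigma> (vs!j) \<kappa>" using vs by blast
      have ec: "vs!j \<in> carrier_vec N" and ee: "\<sigma> *\<^sub>v vs!j = \<kappa> \<cdot>\<^sub>v vs!j" using e dS unfolding eigenvector_def by auto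
      show "\<exists>d. \<forall>r<N. vs!j $ r = (\<Sum>i<n. d i * t i $ r)"
        by (rule exI[of _ "\<lambda>i. k i * (vs!j \<bullet>c t i) / \<kappa>"]) (use r1_eig[OF tc ec ee[unfolded \<sigma>_def] k0] in simp)
    qed
    then obtain d where d: "\<forall>j<length vs. \<forall>r<N. vs!j $ r = (\<Sum>i<n. d j i * t i $ r)" using coef[unfolded choice_iff'] by blast
    define ts where "ts = map t [0..<n]"
    have "\<forall>r<N. v $ r = (\<Sum>i<length ts. (\<Sum>j<length vs. c j * d j i) * ts!i $ r)"
    proof (intro allI impI)
      fix r assume r: "r < N"
      have "v $ r = (\<Sum>j<length vs. c j * vs!j $ r)" using vc r by simp
      also have "\<dots> = (\<Sum>j<length vs. c j * (\<Sum>i<n. d j i * t i $ r))"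
        by (intro sum.cong refl) (simp add: d r)
      also have "\<dots> = (\<Sum>j<length vs. \<Sum>i<n. c j * d j i * t i $ r)" by (simp add: sum_distrib_left mult.assoc)
      also have "\<dots> = (\<Sum>i<n. \<Sum>j<length vs. c j * d j i * t i $ r)" by (rule sum.swap)
      also have "\<dots> = (\<Sum>i<n. (\<Sum>j<length vs. c j * d j i) * t i $ r)" by (simp add: sum_distrib_right)
      also have "\<dots> = (\<Sum>i<length ts. (\<Sum>j<length vs. c j * d j i) * ts!i $ r)" by (simp add: ts_def)
      finally show "v $ r = (\<Sum>i<length ts. (\<Sum>j<length vs. c j * d j i) * ts!i $ r)" .
    qed
    moreover have "set ts \<subseteq> {tensor_vec n n (bs ! i) (bs ! i) | i. i < n}" unfolding ts_def t_def by auto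
    ultimately show "v \<in> eq_basis n bs" unfolding eq_basis_def using v N_def by (intro cspanI) auto
  qed
  have "lifting n n (eq_basis n bs) \<rho> \<rho>"
  proof -
    have "pdo (n*n) \<sigma> \<and> coupling n n \<sigma> \<rho> \<rho> \<and> supp \<sigma> \<subseteq> eq_basis n bs"
      using pdoS p1 p2 su N_def by (simp add: coupling_def)
    then show ?thesis unfolding lifting_def by (rule exI)
  qed
  then show ?thesis using onb by blast
qed



lemma sym_eq:
  assumes p: "pdo (n*n) \<sigma>" and cp: "coupling n n \<sigma> \<rho>1 \<rho>2" and su: "supp \<sigma> \<subseteq> eq_sym n"
  shows "\<rho>1 = \<rho>2"
proof -
  define N where "N = n * n"
  have pos: "positive_op N \<sigma>" using p pdo_def N_def by auto
  have h: "herm N \<sigma>" by (rule pos_herm[OF pos])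
  have S: "\<sigma> \<in> carrier_mat N N" using h herm_def by auto
  obtain bs where o: "onl N bs" and ev0: "\<forall>i<N. \<exists>k. \<sigma> *\<^sub>v (bs!i) = k \<cdot>\<^sub>v (bs!i)"
    using spectral[OF h] by blast
  obtain k where ev: "\<forall>i<N. \<sigma> *\<^sub>v (bs!i) = k i \<cdot>\<^sub>v (bs!i)" using ev0[unfolded choice_iff'] by blast
  have bc: "\<And>i. i < N \<Longrightarrow> bs!i \<in> carrier_vec N" using onl_carrier[OF o] .
  have bb: "\<And>i. i < N \<Longrightarrow> bs!i \<bullet>c bs!i = 1" using o unfolding onl_def by auto
  have kq: "k i = (\<sigma> *\<^sub>v bs!i) \<bullet>c bs!i" if i: "i < N" for i
    using ev i smult_inner_l[OF bc[OF i] bc[OF i], of "k i"] bb[OF i] by simp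
  have kpos: "Im (k i) = 0 \<and> Re (k i) \<ge> 0" if i: "i < N" for i
    using pos bc[OF i] kq[OF i] unfolding positive_op_def by auto
  have kr: "\<forall>i<N. cnj (k i) = k i" using kpos by (simp add: complex_eq_iff)
  note dc = decomp[OF h o ev kr]
  have bsym: "bs!i $ (sw n r) = bs!i $ r" if i: "i < N" and k0: "k i \<noteq> 0" and r: "r < N" for i r
  proof -
    have nz: "bs!i \<noteq> 0\<^sub>v N" using conjugate_square_eq_0_vec[OF bc[OF i]] bb[OF i] by auto
    have ei: "eigenvector \<sigma> (bs!i) (k i)" unfolding eigenvector_def using S bc[OF i] ev i nz by auto
    have "bs!i \<in> cspan N {v. \<exists>\<kappa>. \<kappa> \<noteq> 0 \<and> eigenvector \<sigma> v \<kappa>}"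
      by (rule cspanI[OF bc[OF i], of "[bs!i]" _ "\<lambda>_. 1"]) (use ei k0 in auto)
    then have "bs!i \<in> eq_sym n" using su S unfolding supp_def by auto
    then show ?thesis using eq_sym_D(1) r N_def by auto
  qed
  have ssym: "\<sigma> $$ (sw n r, sw n c) = \<sigma> $$ (r, c)" if r: "r < N" and c: "c < N" for r c
  proof -
    have "\<sigma> $$ (sw n r, sw n c) = (\<Sum>i<N. k i * bs!i$(sw n r) * cnj (bs!i$(sw n c)))"
      by (rule dc) (use sw_lt r c N_def in auto)
    also have "\<dots> = (\<Sum>i<N. k i * bs!i$r * cnj (bs!i$c))"
    proof (rule sum.cong)
      fix i assume "i \<in> {..<N}" then have i: "i < N" by simp
      show "k i * bs!i$(sw n r) * cnj (bs!i$(sw n c)) = k i * bs!i$r * cnj (bs!i$c)"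
        using bsym[OF i _ r] bsym[OF i _ c] by (cases "k i = 0") auto
    qed simp
    also have "\<dots> = \<sigma> $$ (r,c)" using dc[OF r c] by simp
    finally show ?thesis .
  qed
  have "ptrace2 n n \<sigma> = ptrace1 n n \<sigma>"
  proof (rule eq_matI)
    fix a c assume "a < dim_row (ptrace1 n n \<sigma>)" "c < dim_col (ptrace1 n n \<sigma>)"
    then have a: "a < n" and c: "c < n" by (auto simp: ptrace1_def)
    have "ptrace2 n n \<sigma> $$ (a,c) = (\<Sum>j<n. \<sigma> $$ (a*n+j, c*n+j))" unfolding ptrace2_def using a c by simp
    also have "\<dots> = (\<Sum>j<n. \<sigma> $$ (j*n+a, j*n+c))"
    proof (rule sum.cong)
      fix j assume "j \<in> {..<n}" then have j: "j < n" by simp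
      show "\<sigma> $$ (a*n+j, c*n+j) = \<sigma> $$ (j*n+a, j*n+c)"
        using ssym[of "a*n+j" "c*n+j"] sw_ij[OF a j] sw_ij[OF c j] idx_lt[OF a j] idx_lt[OF c j] N_def by simp
    qed simp
    also have "\<dots> = ptrace1 n n \<sigma> $$ (a,c)" unfolding ptrace1_def using a c by simp
    finally show "ptrace2 n n \<sigma> $$ (a,c) = ptrace1 n n \<sigma> $$ (a,c)" .
  qed (simp_all add: ptrace1_def ptrace2_def)
  then show ?thesis using cp unfolding coupling_def by simp
qed

theorem proposition3p8:
  fixes n :: nat and \<rho>1 \<rho>2 :: "complex mat"
  assumes "pdo n \<rho>1" and "pdo n \<rho>2"
  shows "(\<rho>1 = \<rho>2 \<longleftrightarrow> (\<exists>B. onb n B \<and> lifting n n (eq_basis n B) \<rho>1 \<rho>2))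
       \<and> (\<rho>1 = \<rho>2 \<longleftrightarrow> lifting n n (eq_sym n) \<rho>1 \<rho>2)"
proof -
  have b2s: "lifting n n (eq_sym n) \<rho>1 \<rho>2" if "lifting n n (eq_basis n B) \<rho>1 \<rho>2" for B
    using that eq_basis_sub[of n B] unfolding lifting_def by blast
  have s2e: "\<rho>1 = \<rho>2" if "lifting n n (eq_sym n) \<rho>1 \<rho>2"
    using that sym_eq unfolding lifting_def by blast
  have e2b: "\<exists>B. onb n B \<and> lifting n n (eq_basis n B) \<rho>1 \<rho>2" if "\<rho>1 = \<rho>2"
    using exists_coupling[OF assms(1)] that by simp
  show ?thesis using b2s s2e e2b by blast
qed

end
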